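(* Let $X$ be a real random variable with law $\mu$ describing the agents' types, with $\mu$ satisfying the standing assumptions below and $\int|x|\,d\mu<+\infty$. If $\vec v_\mu$ is the optimal percentile vector associated with $X$, then $\vec v_\mu$ is also the optimal percentile vector for every random variable of the form $X'=\sigma X+m$ with $m\in\mathbb{R}$ and $\sigma>0$.
   Context: For $\vec x\in\mathbb{R}^n$, $\vec y\in\mathbb{R}^k$: $SC(\vec x,\vec y)=\frac1n\sum_i\min_j|x_i-y_j|$, $SC_{opt}(\vec x)=\min_{\vec y}SC(\vec x,\vec y)$. A percentile vector is $\vec v$ with $0\le v_1\le\dots\le v_k\le1$; $\mathcal{PM}_{\vec v}$ sorts the reports $x_{(1)}\le\dots\le x_{(n)}$ and places facility $j$ at $x_{(\lfloor(n-1)v_j\rfloor+1)}$. For a law $\eta$ and $\vec X_n$ i.i.d. of law $\eta$, $B^{(n)}_{ar}(f)=\mathbb{E}[SC_f(\vec X_n)]/\mathbb{E}[SC_{opt}(\vec X_n)]$. The optimal percentile vector associated with a random variable of law $\eta$ is $(F_\eta(y_1),\dots,F_\eta(y_k))$, where $y_1\le\dots\le y_k$ are the support points of a solution of $\min_{\lambda\in\mathcal{P}_k(\mathbb{R})}W_1(\eta,\lambda)$ ($\mathcal{P}_k(\mathbb{R})$: probability measures $\sum_{j=1}^k\nu_j\delta_{x_j}$; $W_1$: 1-Wasserstein distance; $F_\eta$: c.d.f.); it satisfies $\lim_n B^{(n)}_{ar}(\mathcal{PM}_{\vec v})=1$. Standing assumptions on $\mu$: absolutely continuous with density $\rho_\mu$;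 support an interval on whose interior $\rho_\mu>0$; $\rho_\mu$ differentiable on the support. *)

theory Defs
  imports "HOL-Probability.Probability"
begin

definition couplings :: "real measure \<Rightarrow> real measure \<Rightarrow> (real \<times> real) measure set" where
  "couplings \<eta> L = {\<pi>. sets \<pi> = sets (borel :: (real \<times> real) measure) \<and> prob_space \<pi> \<and>
      distr \<pi> borel fst = \<eta> \<and> distr \<pi> borel snd = L}"

definition W1 :: "real measure \<Rightarrow> real measure \<Rightarrow> ennreal" where
  "W1 \<eta> L = (INF \<pi> \<in> couplings \<eta> L. \<integral>\<^sup>+ z. ennreal \<bar>fst z - snd z\<bar> \<partial>\<pi>)"

definition Pk :: "nat \<Rightarrow> real measure set" where
  "Pk k = {L. \<exists>p :: real pmf. finite (set_pmf p) \<and> card (set_pmf p) \<le> k \<and>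
                 L = distr (measure_pmf p) borel (\<lambda>x. x)}"

definition support_points :: "real measure \<Rightarrow> real set" where
  "support_points L = {x. measure L {x} > 0}"

definition opt_percentile_vectors :: "real measure \<Rightarrow> nat \<Rightarrow> real list set" where
  "opt_percentile_vectors \<eta> k =
     {map (cdf \<eta>) (sorted_list_of_set (support_points L)) | L.
        L \<in> Pk k \<and> W1 \<eta> L = (INF L' \<in> Pk k. W1 \<eta> L')}"

end

theory Submission
  imports Defs
begin

lemma aff_meas: "(\<lambda>x::real. a * x + b) \<in> borel_measurable borel"
  by (intro borel_measurable_continuous_onI continuous_intros)

lemma pair_aff_meas:
  "(\<lambda>z::real\<times>real. (a * fst z + b, a * snd z + b)) \<in> borel_measurable borel"
  by (intro borel_measurable_continuous_onI continuous_intros)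

lemma fst_meas: "(fst :: real\<times>real \<Rightarrow> real) \<in> borel_measurable borel"
  by (intro borel_measurable_continuous_onI continuous_intros)

lemma snd_meas: "(snd :: real\<times>real \<Rightarrow> real) \<in> borel_measurable borel"
  by (intro borel_measurable_continuous_onI continuous_intros)

lemma W1_affine_le:
  assumes s: "\<sigma> > 0"
  shows "W1 (distr \<eta> borel (\<lambda>x. \<sigma> * x + m)) (distr L borel (\<lambda>x. \<sigma> * x + m))
         \<le> ennreal \<sigma> * W1 \<eta> L"
proof -
  define T where "T = (\<lambda>x::real. \<sigma> * x + m)"
  define W where "W = W1 (distr \<eta> borel T) (distr L borel T)"
  have key: "W \<le> ennreal \<sigma> * (\<integral>\<^sup>+ z. ennreal \<bar>fst z - snd z\<bar> \<partial>\<pi>)"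
    if hp: "\<pi> \<in> couplings \<eta> L" for \<pi>
  proof -
    define f where "f = (\<lambda>z::real\<times>real. (\<sigma> * fst z + m, \<sigma> * snd z + m))"
    have sp: "sets \<pi> = sets borel" and pp: "prob_space \<pi>"
      and d1: "distr \<pi> borel fst = \<eta>" and d2: "distr \<pi> borel snd = L"
      using hp by (auto simp: couplings_def)
    have fm: "f \<in> measurable \<pi> borel"
      using pair_aff_meas[of \<sigma> m] unfolding f_def
      by (simp add: measurable_cong_sets[OF sp refl])
    have fstm: "fst \<in> measurable \<pi> borel"
      using fst_meas by (simp add: measurable_cong_sets[OF sp refl])
    have sndm: "snd \<in> measurable \<pi> borel"
      using snd_meas by (simp add: measurable_cong_sets[OF sp refl])
    define \<pi>' where "\<pi>' = distr \<pi> borel f"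
    have e1: "distr \<pi>' borel fst = distr \<eta> borel T"
    proof -
      have "distr \<pi>' borel fst = distr \<pi> borel (fst \<circ> f)"
        unfolding \<pi>'_def by (rule distr_distr[OF fst_meas fm])
      also have "fst \<circ> f = T \<circ> fst" by (auto simp: f_def T_def)
      also have "distr \<pi> borel (T \<circ> fst) = distr (distr \<pi> borel fst) borel T"
        using distr_distr[OF aff_meas[of \<sigma> m] fstm] by (simp add: T_def)
      finally show ?thesis using d1 by simp
    qed
    have e2: "distr \<pi>' borel snd = distr L borel T"
    proof -
      have "distr \<pi>' borel snd = distr \<pi> borel (snd \<circ> f)"
        unfolding \<pi>'_def by (rule distr_distr[OF snd_meas fm])
      also have "snd \<circ> f = T \<circ> snd" by (auto simp: f_def T_def)
      also have "distr \<pi> borel (T \<circ> snd) = distr (distr \<pi> borel snd) borel T"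
        using distr_distr[OF aff_meas[of \<sigma> m] sndm] by (simp add: T_def)
      finally show ?thesis using d2 by simp
    qed
    have cp: "\<pi>' \<in> couplings (distr \<eta> borel T) (distr L borel T)"
      unfolding couplings_def using e1 e2 pp fm
      by (auto simp: \<pi>'_def intro: prob_space.prob_space_distr)
    have gm: "(\<lambda>z::real\<times>real. ennreal \<bar>fst z - snd z\<bar>) \<in> borel_measurable borel"
      by (intro measurable_compose[OF _ measurable_ennreal] borel_measurable_continuous_onI continuous_intros)
    have "(\<integral>\<^sup>+ z. ennreal \<bar>fst z - snd z\<bar> \<partial>\<pi>') = (\<integral>\<^sup>+ z. ennreal \<bar>fst (f z) - snd (f z)\<bar> \<partial>\<pi>)"
      unfolding \<pi>'_def by (rule nn_integral_distr[OF fm]) (use gm in \<open>subst measurable_cong_sets[of _ borel borel borel], auto\<close>)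
    also have "\<dots> = (\<integral>\<^sup>+ z. ennreal \<sigma> * ennreal \<bar>fst z - snd z\<bar> \<partial>\<pi>)"
    proof (rule nn_integral_cong)
      fix z :: "real \<times> real"
      have "\<bar>fst (f z) - snd (f z)\<bar> = \<sigma> * \<bar>fst z - snd z\<bar>"
        using s by (simp add: f_def abs_mult flip: right_diff_distrib)
      then show "ennreal \<bar>fst (f z) - snd (f z)\<bar> = ennreal \<sigma> * ennreal \<bar>fst z - snd z\<bar>"
        using s by (simp add: ennreal_mult)
    qed
    also have "\<dots> = ennreal \<sigma> * (\<integral>\<^sup>+ z. ennreal \<bar>fst z - snd z\<bar> \<partial>\<pi>)"
      by (rule nn_integral_cmult) (use gm sp in \<open>simp add: measurable_cong_sets[OF sp refl]\<close>)
    finally have "(\<integral>\<^sup>+ z. ennreal \<bar>fst z - snd z\<bar> \<partial>\<pi>') = ennreal \<sigma> * (\<integral>\<^sup>+ z. ennreal \<bar>fst z - snd z\<bar> \<partial>\<pi>)" .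
    moreover have "W \<le> (\<integral>\<^sup>+ z. ennreal \<bar>fst z - snd z\<bar> \<partial>\<pi>')"
      unfolding W_def W1_def by (rule INF_lower[OF cp])
    ultimately show ?thesis by simp
  qed
  have one: "ennreal \<sigma> * ennreal (1/\<sigma>) = 1"
    using s by (simp add: ennreal_mult[symmetric])
  have "W * ennreal (1/\<sigma>) \<le> W1 \<eta> L"
    unfolding W1_def
  proof (rule INF_greatest)
    fix \<pi> assume "\<pi> \<in> couplings \<eta> L"
    then have "W * ennreal (1/\<sigma>) \<le> (ennreal \<sigma> * (\<integral>\<^sup>+ z. ennreal \<bar>fst z - snd z\<bar> \<partial>\<pi>)) * ennreal (1/\<sigma>)"
      by (intro mult_right_mono key) auto
    also have "\<dots> = (\<integral>\<^sup>+ z. ennreal \<bar>fst z - snd z\<bar> \<partial>\<pi>) * (ennreal \<sigma> * ennreal (1/\<sigma>))"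
      by (simp only: mult.assoc mult.commute mult.left_commute)
    also have "\<dots> = (\<integral>\<^sup>+ z. ennreal \<bar>fst z - snd z\<bar> \<partial>\<pi>)"
      by (simp only: one mult_1_right)
    finally show "W * ennreal (1/\<sigma>) \<le> (\<integral>\<^sup>+ z. ennreal \<bar>fst z - snd z\<bar> \<partial>\<pi>)" .
  qed
  then have "ennreal \<sigma> * (W * ennreal (1/\<sigma>)) \<le> ennreal \<sigma> * W1 \<eta> L"
    by (intro mult_left_mono) auto
  moreover have "ennreal \<sigma> * (W * ennreal (1/\<sigma>)) = W * (ennreal \<sigma> * ennreal (1/\<sigma>))"
    by (simp only: mult.assoc mult.commute mult.left_commute)
  then have "ennreal \<sigma> * (W * ennreal (1/\<sigma>)) = W"
    by (simp only: one mult_1_right)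
  ultimately show ?thesis by (simp add: W_def T_def)
qed


lemma distr_aff_inv:
  fixes \<eta> :: "real measure" and \<sigma> m :: real
  assumes s: "\<sigma> > 0" and se: "sets \<eta> = sets borel"
  shows "distr (distr \<eta> borel (\<lambda>x. \<sigma> * x + m)) borel (\<lambda>x. (1/\<sigma>) * x + (- m/\<sigma>)) = \<eta>"
proof -
  have m1: "(\<lambda>x. \<sigma> * x + m) \<in> measurable \<eta> borel"
    using aff_meas[of \<sigma> m] by (simp add: measurable_cong_sets[OF se refl])
  have "distr (distr \<eta> borel (\<lambda>x. \<sigma> * x + m)) borel (\<lambda>x. (1/\<sigma>) * x + (- m/\<sigma>))
      = distr \<eta> borel ((\<lambda>x. (1/\<sigma>) * x + (- m/\<sigma>)) \<circ> (\<lambda>x. \<sigma> * x + m))"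
    by (rule distr_distr[OF aff_meas m1])
  also have "(\<lambda>x. (1/\<sigma>) * x + (- m/\<sigma>)) \<circ> (\<lambda>x. \<sigma> * x + m) = (\<lambda>x. x)"
    using s by (auto simp: field_simps)
  finally show ?thesis using distr_id2[of borel \<eta>] se by simp
qed

lemma W1_affine_eq:
  assumes s: "\<sigma> > 0" and se: "sets \<eta> = sets borel" and sL: "sets L = sets borel"
  shows "W1 (distr \<eta> borel (\<lambda>x. \<sigma> * x + m)) (distr L borel (\<lambda>x. \<sigma> * x + m))
         = ennreal \<sigma> * W1 \<eta> L"
proof (rule antisym)
  show "W1 (distr \<eta> borel (\<lambda>x. \<sigma> * x + m)) (distr L borel (\<lambda>x. \<sigma> * x + m)) \<le> ennreal \<sigma> * W1 \<eta> L"
    using W1_affine_le[OF s] .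
  define W where "W = W1 (distr \<eta> borel (\<lambda>x. \<sigma> * x + m)) (distr L borel (\<lambda>x. \<sigma> * x + m))"
  have s': "1/\<sigma> > 0" using s by simp
  have "W1 \<eta> L \<le> ennreal (1/\<sigma>) * W"
    using W1_affine_le[OF s', of "distr \<eta> borel (\<lambda>x. \<sigma> * x + m)" "- m/\<sigma>" "distr L borel (\<lambda>x. \<sigma> * x + m)"]
    unfolding W_def distr_aff_inv[OF s se] distr_aff_inv[OF s sL] .
  then have "ennreal \<sigma> * W1 \<eta> L \<le> ennreal \<sigma> * (ennreal (1/\<sigma>) * W)"
    by (intro mult_left_mono) auto
  also have "\<dots> = (ennreal \<sigma> * ennreal (1/\<sigma>)) * W" by (simp only: mult.assoc)
  also have "ennreal \<sigma> * ennreal (1/\<sigma>) = 1"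
    using s by (simp add: ennreal_mult[symmetric])
  finally show "ennreal \<sigma> * W1 \<eta> L \<le> W" by simp
qed

lemma Pk_sets: "L \<in> Pk k \<Longrightarrow> sets L = sets borel"
  by (auto simp: Pk_def)

lemma Pk_distr:
  assumes "L \<in> Pk k" and T: "T \<in> borel_measurable borel"
  shows "distr L borel T \<in> Pk k"
proof -
  obtain p :: "real pmf" where fp: "finite (set_pmf p)" "card (set_pmf p) \<le> k"
    and L: "L = distr (measure_pmf p) borel (\<lambda>x. x)"
    using assms(1) by (auto simp: Pk_def)
  have "distr L borel T = distr (measure_pmf p) borel T"
    unfolding L by (subst distr_distr) (auto simp: T comp_def)
  also have "\<dots> = distr (measure_pmf (map_pmf T p)) borel (\<lambda>x. x)"
    unfolding map_pmf_rep_eq by (subst distr_distr) (auto simp: comp_def)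
  finally have eq: "distr L borel T = distr (measure_pmf (map_pmf T p)) borel (\<lambda>x. x)" .
  have "finite (set_pmf (map_pmf T p))" using fp by simp
  moreover have "card (set_pmf (map_pmf T p)) \<le> k"
    using fp card_image_le[OF fp(1), of T] by simp
  ultimately show ?thesis unfolding Pk_def using eq by blast
qed

lemma support_aff:
  assumes s: "\<sigma> > 0" and sL: "sets L = sets borel"
  shows "support_points (distr L borel (\<lambda>x. \<sigma> * x + m)) = (\<lambda>x. \<sigma> * x + m) ` support_points L"
proof -
  have sp: "space L = UNIV" using sets_eq_imp_space_eq[OF sL] by simp
  have m1: "(\<lambda>x. \<sigma> * x + m) \<in> measurable L borel"
    using aff_meas[of \<sigma> m] by (simp add: measurable_cong_sets[OF sL refl])
  have meq: "measure (distr L borel (\<lambda>x. \<sigma> * x + m)) {y} = measure L {(y - m) / \<sigma>}" for y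
  proof -
    have "measure (distr L borel (\<lambda>x. \<sigma> * x + m)) {y} = measure L ((\<lambda>x. \<sigma> * x + m) -` {y} \<inter> space L)"
      by (rule measure_distr[OF m1]) simp
    also have "(\<lambda>x. \<sigma> * x + m) -` {y} \<inter> space L = {(y - m) / \<sigma>}"
      using s by (auto simp: sp field_simps)
    finally show ?thesis .
  qed
  show ?thesis
  proof (rule set_eqI)
    fix y
    have "y = \<sigma> * ((y - m) / \<sigma>) + m" using s by (simp add: field_simps)
    moreover have "\<And>x. y = \<sigma> * x + m \<Longrightarrow> x = (y - m) / \<sigma>" using s by (simp add: field_simps)
    ultimately show "y \<in> support_points (distr L borel (\<lambda>x. \<sigma> * x + m)) \<longleftrightarrow> y \<in> (\<lambda>x. \<sigma> * x + m) ` support_points L"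
      unfolding support_points_def using meq by (auto simp: image_iff)
  qed
qed

lemma sorted_aff:
  assumes s: "\<sigma> > 0"
  shows "sorted_list_of_set ((\<lambda>x::real. \<sigma> * x + m) ` A) = map (\<lambda>x. \<sigma> * x + m) (sorted_list_of_set A)"
proof (cases "finite A")
  case True
  have sm: "strict_mono (\<lambda>x::real. \<sigma> * x + m)" using s by (auto simp: strict_mono_def)
  have "sorted (map (\<lambda>x. \<sigma> * x + m) (sorted_list_of_set A))"
    unfolding sorted_map
    by (rule sorted_wrt_mono_rel[OF _ sorted_list_of_set(2)]) (use s in auto)
  moreover have "distinct (map (\<lambda>x. \<sigma> * x + m) (sorted_list_of_set A))"
    using s True by (auto simp: distinct_map inj_on_def)
  ultimately have "sorted_list_of_set (set (map (\<lambda>x. \<sigma> * x + m) (sorted_list_of_set A)))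
     = map (\<lambda>x. \<sigma> * x + m) (sorted_list_of_set A)"
    by (rule sorted_list_of_set.idem_if_sorted_distinct)
  then show ?thesis using True by simp
next
  case False
  have "inj (\<lambda>x::real. \<sigma> * x + m)" using s by (auto simp: inj_on_def)
  then have "infinite ((\<lambda>x::real. \<sigma> * x + m) ` A)" using False finite_imageD inj_on_subset by blast
  then show ?thesis using False by simp
qed

lemma cdf_aff:
  assumes s: "\<sigma> > 0" and se: "sets \<eta> = sets borel"
  shows "cdf (distr \<eta> borel (\<lambda>x. \<sigma> * x + m)) (\<sigma> * y + m) = cdf \<eta> y"
proof -
  have sp: "space \<eta> = UNIV" using sets_eq_imp_space_eq[OF se] by simp
  have m1: "(\<lambda>x. \<sigma> * x + m) \<in> measurable \<eta> borel"
    using aff_meas[of \<sigma> m] by (simp add: measurable_cong_sets[OF se refl])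
  have "cdf (distr \<eta> borel (\<lambda>x. \<sigma> * x + m)) (\<sigma> * y + m) = measure \<eta> ((\<lambda>x. \<sigma> * x + m) -` {..\<sigma> * y + m} \<inter> space \<eta>)"
    unfolding cdf_def by (rule measure_distr[OF m1]) simp
  also have "(\<lambda>x. \<sigma> * x + m) -` {..\<sigma> * y + m} \<inter> space \<eta> = {..y}"
    using s by (auto simp: sp)
  finally show ?thesis by (simp add: cdf_def)
qed

theorem theorem8:
  fixes M :: "'a measure" and X :: "'a \<Rightarrow> real" and \<rho> :: "real \<Rightarrow> real"
    and I :: "real set" and k :: nat and \<sigma> m :: real and v :: "real list"
  assumes "prob_space M"
    and "X \<in> borel_measurable M"
    and dens: "distributed M lborel X (\<lambda>x. ennreal (\<rho> x))"
    and nonneg: "\<And>x. \<rho> x \<ge> 0"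
    and I_int: "is_interval I" and I_closed: "closed I"
    and outside: "\<And>x. x \<notin> I \<Longrightarrow> \<rho> x = 0"
    and pos: "\<And>x. x \<in> interior I \<Longrightarrow> \<rho> x > 0"
    and diff: "\<rho> differentiable_on I"
    and first_moment: "(\<integral>\<^sup>+ x. ennreal \<bar>x\<bar> \<partial>(distr M borel X)) < \<infinity>"
    and opt: "v \<in> opt_percentile_vectors (distr M borel X) k"
    and "\<sigma> > 0"
  shows "v \<in> opt_percentile_vectors (distr M borel (\<lambda>\<omega>. \<sigma> * X \<omega> + m)) k"
proof -
  have s: "\<sigma> > 0" by fact
  define T where "T = (\<lambda>x::real. \<sigma> * x + m)"
  define \<eta> where "\<eta> = distr M borel X"
  have se: "sets \<eta> = sets borel" by (simp add: \<eta>_def)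
  have eta': "distr M borel (\<lambda>\<omega>. \<sigma> * X \<omega> + m) = distr \<eta> borel T"
    unfolding \<eta>_def T_def by (subst distr_distr) (auto simp: aff_meas assms(2) comp_def)
  obtain L where L: "L \<in> Pk k" "W1 \<eta> L = (INF L' \<in> Pk k. W1 \<eta> L')"
    and v: "v = map (cdf \<eta>) (sorted_list_of_set (support_points L))"
    using opt unfolding opt_percentile_vectors_def \<eta>_def by blast
  have sL: "sets L = sets borel" using Pk_sets[OF L(1)] .
  define L' where "L' = distr L borel T"
  have L'P: "L' \<in> Pk k" unfolding L'_def T_def by (rule Pk_distr[OF L(1) aff_meas])
  have W: "W1 (distr \<eta> borel T) L' = (INF L2 \<in> Pk k. W1 (distr \<eta> borel T) L2)"
  proof (rule antisym)
    show "(INF L2 \<in> Pk k. W1 (distr \<eta> borel T) L2) \<le> W1 (distr \<eta> borel T) L'"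
      by (rule INF_lower[OF L'P])
    show "W1 (distr \<eta> borel T) L' \<le> (INF L2 \<in> Pk k. W1 (distr \<eta> borel T) L2)"
    proof (rule INF_greatest)
      fix L2 assume L2: "L2 \<in> Pk k"
      define L3 where "L3 = distr L2 borel (\<lambda>x. (1/\<sigma>) * x + (- m/\<sigma>))"
      have L3P: "L3 \<in> Pk k" unfolding L3_def by (rule Pk_distr[OF L2 aff_meas])
      have s3: "sets L3 = sets borel" by (simp add: L3_def)
      have L2eq: "distr L3 borel T = L2"
      proof -
        have "distr L3 borel T = distr L2 borel (T \<circ> (\<lambda>x. (1/\<sigma>) * x + (- m/\<sigma>)))"
          unfolding L3_def T_def
          by (rule distr_distr[OF aff_meas]) (simp add: aff_meas measurable_cong_sets[OF Pk_sets[OF L2] refl])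
        also have "T \<circ> (\<lambda>x. (1/\<sigma>) * x + (- m/\<sigma>)) = (\<lambda>x. x)"
          using s by (auto simp: T_def field_simps)
        finally show ?thesis using distr_id2[of borel L2] Pk_sets[OF L2] by simp
      qed
      have "W1 (distr \<eta> borel T) L' = ennreal \<sigma> * W1 \<eta> L"
        unfolding L'_def T_def by (rule W1_affine_eq[OF s se sL])
      also have "\<dots> \<le> ennreal \<sigma> * W1 \<eta> L3"
        by (intro mult_left_mono) (auto simp: L(2) intro: INF_lower[OF L3P])
      also have "\<dots> = W1 (distr \<eta> borel T) (distr L3 borel T)"
        unfolding T_def by (rule W1_affine_eq[OF s se s3, symmetric])
      finally show "W1 (distr \<eta> borel T) L' \<le> W1 (distr \<eta> borel T) L2" using L2eq by simp
    qed
  qed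
  have "map (cdf (distr \<eta> borel T)) (sorted_list_of_set (support_points L'))
      = map (cdf (distr \<eta> borel T)) (map T (sorted_list_of_set (support_points L)))"
    unfolding L'_def T_def support_aff[OF s sL] sorted_aff[OF s] ..
  also have "\<dots> = v"
    unfolding v by (simp add: T_def cdf_aff[OF s se])
  finally have "v = map (cdf (distr \<eta> borel T)) (sorted_list_of_set (support_points L'))" by simp
  then show ?thesis
    unfolding eta' opt_percentile_vectors_def using L'P W by blast
qed

end
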